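(* Let $R$ be a $d$-variate tail copula, $d\ge2$, whose (right-hand) partial derivatives exist, and write $R(x,y)=R(x,y,\infty,\ldots,\infty)$ for its bivariate margin in the first two coordinates. For $g>0$ and $(x,y,\mathbf{z})\in[0,\infty)\times[0,\infty)\times[0,\infty)^{d-2}$, $$0\le\dot R_1(x,y+g,\mathbf{z})-\dot R_1(x,y,\mathbf{z})\le\dot R_1(x,y+g)-\dot R_1(x,y),$$ where $\dot R_1$ denotes the right-hand partial derivative with respect to the first argument (of the $d$-variate, respectively bivariate, function).
   Context: A $d$-variate tail copula is a function $R:[0,\infty)^d\to[0,\infty)$ with $R(\mathbf{x})=\lim_{s\downarrow0}s^{-1}\mathbb{P}\{V_1\le sx_1,\ldots,V_d\le sx_d\}$ for a random vector with uniform $(0,1)$ margins (the limit existing for all $\mathbf{x}$); it extends to arguments with some coordinates equal to $+\infty$ (not all) by dropping the corresponding events, i.e. $R(x,y,\infty,\ldots,\infty)=\lim_{s\downarrow0}s^{-1}\mathbb{P}\{V_1\le sx,V_2\le sy\}$. *)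

theory Defs
  imports "HOL-Probability.Probability"
begin

text \<open>Points of [0,oo)^d are represented as functions nat => real; only the
coordinates 0..d-1 are relevant (coordinate 0 is the first, 1 the second).\<close>

definition nonneg_point :: "nat \<Rightarrow> (nat \<Rightarrow> real) \<Rightarrow> bool" where
  "nonneg_point d w \<longleftrightarrow> (\<forall>i<d. 0 \<le> w i)"

definition has_rpartial :: "((nat \<Rightarrow> real) \<Rightarrow> real) \<Rightarrow> nat \<Rightarrow> (nat \<Rightarrow> real) \<Rightarrow> bool" where
  "has_rpartial R i w \<longleftrightarrow>
     (\<exists>D. ((\<lambda>h. (R (w(i := w i + h)) - R w) / h) \<longlongrightarrow> D) (at_right 0))"

definition rpartial :: "((nat \<Rightarrow> real) \<Rightarrow> real) \<Rightarrow> nat \<Rightarrow> (nat \<Rightarrow> real) \<Rightarrow> real" where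
  "rpartial R i w = Lim (at_right 0) (\<lambda>h. (R (w(i := w i + h)) - R w) / h)"

definition uniform_margins :: "'a measure \<Rightarrow> nat \<Rightarrow> (nat \<Rightarrow> 'a \<Rightarrow> real) \<Rightarrow> bool" where
  "uniform_margins M d V \<longleftrightarrow>
     (\<forall>i<d. V i \<in> borel_measurable M \<and>
        (\<forall>t\<in>{0..1}. measure M {\<omega> \<in> space M. V i \<omega> \<le> t} = t))"

definition is_tail_copula_of :: "'a measure \<Rightarrow> nat \<Rightarrow> (nat \<Rightarrow> 'a \<Rightarrow> real) \<Rightarrow> ((nat \<Rightarrow> real) \<Rightarrow> real) \<Rightarrow> bool" where
  "is_tail_copula_of M d V R \<longleftrightarrow>
     (\<forall>w. nonneg_point d w \<longrightarrow>
        ((\<lambda>s. measure M {\<omega> \<in> space M. \<forall>i<d. V i \<omega> \<le> s * w i} / s) \<longlongrightarrow> R w) (at_right 0))"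

text \<open>R2 is the bivariate margin R(x,y,oo,...,oo) in the first two coordinates.\<close>

definition is_biv_margin_of :: "'a measure \<Rightarrow> (nat \<Rightarrow> 'a \<Rightarrow> real) \<Rightarrow> (real \<Rightarrow> real \<Rightarrow> real) \<Rightarrow> bool" where
  "is_biv_margin_of M V R2 \<longleftrightarrow>
     (\<forall>x y. 0 \<le> x \<longrightarrow> 0 \<le> y \<longrightarrow>
        ((\<lambda>s. measure M {\<omega> \<in> space M. V 0 \<omega> \<le> s * x \<and> V 1 \<omega> \<le> s * y} / s) \<longlongrightarrow> R2 x y) (at_right 0))"

end

theory Submission
  imports Defs
begin

lemma rect:
  fixes M :: "'a measure" and f g :: "'a \<Rightarrow> real" and Q :: "'a \<Rightarrow> bool"
  assumes fm: "finite_measure M" and aa: "a \<le> a'" and bb: "b \<le> b'"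
    and f: "f \<in> borel_measurable M" and g: "g \<in> borel_measurable M"
    and Q: "{\<omega>\<in>space M. Q \<omega>} \<in> sets M"
  defines "E \<equiv> \<lambda>Q a b. measure M {\<omega>\<in>space M. f \<omega> \<le> a \<and> g \<omega> \<le> b \<and> Q \<omega>}"
  shows "0 \<le> E Q a' b' - E Q a b' - (E Q a' b - E Q a b)"
    and "E Q a' b' - E Q a b' - (E Q a' b - E Q a b)
         \<le> E (\<lambda>_. True) a' b' - E (\<lambda>_. True) a b' - (E (\<lambda>_. True) a' b - E (\<lambda>_. True) a b)"
proof -
  interpret finite_measure M by (rule fm)
  define S where "S \<equiv> \<lambda>Q a b. {\<omega>\<in>space M. f \<omega> \<le> a \<and> g \<omega> \<le> b \<and> Q \<omega>}"
  have meas: "S P a b \<in> sets M" if "{\<omega>\<in>space M. P \<omega>} \<in> sets M" for P a b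
  proof -
    have "S P a b = {\<omega>\<in>space M. f \<omega> \<le> a} \<inter> {\<omega>\<in>space M. g \<omega> \<le> b} \<inter> {\<omega>\<in>space M. P \<omega>}"
      by (auto simp: S_def)
    moreover have "{\<omega>\<in>space M. f \<omega> \<le> a} \<in> sets M" using f by measurable
    moreover have "{\<omega>\<in>space M. g \<omega> \<le> b} \<in> sets M" using g by measurable
    ultimately show ?thesis using that by auto
  qed
  have QT: "{\<omega>\<in>space M. True} \<in> sets M" by simp
  have E: "E P a b = measure M (S P a b)" for P a b by (simp add: E_def S_def)
  have d1: "E P a' c - E P a c = measure M (S P a' c - S P a c)" if "{\<omega>\<in>space M. P \<omega>} \<in> sets M" for P c
    unfolding E using meas[OF that] aa
    by (subst finite_measure_Diff) (auto simp: S_def)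
  have d2: "measure M (S P a' b' - S P a b') - measure M (S P a' b - S P a b)
      = measure M ((S P a' b' - S P a b') - (S P a' b - S P a b))" if "{\<omega>\<in>space M. P \<omega>} \<in> sets M" for P
    using meas[OF that] aa bb
    by (subst finite_measure_Diff) (auto simp: S_def)
  have "0 \<le> measure M ((S Q a' b' - S Q a b') - (S Q a' b - S Q a b))" by simp
  then show "0 \<le> E Q a' b' - E Q a b' - (E Q a' b - E Q a b)"
    using d1[OF Q] d2[OF Q] by simp
  have "measure M ((S Q a' b' - S Q a b') - (S Q a' b - S Q a b))
     \<le> measure M ((S (\<lambda>_. True) a' b' - S (\<lambda>_. True) a b') - (S (\<lambda>_. True) a' b - S (\<lambda>_. True) a b))"
    using meas[OF QT] by (intro finite_measure_mono) (auto simp: S_def)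
  then show "E Q a' b' - E Q a b' - (E Q a' b - E Q a b)
         \<le> E (\<lambda>_. True) a' b' - E (\<lambda>_. True) a b' - (E (\<lambda>_. True) a' b - E (\<lambda>_. True) a b)"
    using d1[OF Q] d2[OF Q] d1[OF QT] d2[OF QT] by simp
qed

lemma setsplit:
  fixes p w :: "nat \<Rightarrow> real" and V :: "nat \<Rightarrow> 'a \<Rightarrow> real"
  assumes "2 \<le> d" "\<forall>i\<ge>2. p i = w i"
  shows "{\<omega>\<in>space M. \<forall>i<d. V i \<omega> \<le> s * p i}
       = {\<omega>\<in>space M. V 0 \<omega> \<le> s * p 0 \<and> V 1 \<omega> \<le> s * p 1 \<and> (\<forall>i\<in>{2..<d}. V i \<omega> \<le> s * w i)}"
proof -
  have "(\<forall>i<d. P i) \<longleftrightarrow> P 0 \<and> P 1 \<and> (\<forall>i\<in>{2..<d}. P i)" for P :: "nat \<Rightarrow> bool"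
  proof
    assume "\<forall>i<d. P i" thus "P 0 \<and> P 1 \<and> (\<forall>i\<in>{2..<d}. P i)" using assms(1) by auto
  next
    assume H: "P 0 \<and> P 1 \<and> (\<forall>i\<in>{2..<d}. P i)"
    show "\<forall>i<d. P i"
    proof (intro allI impI)
      fix i assume "i < d"
      show "P i"
      proof (cases "i < 2")
        case True then have "i = 0 \<or> i = 1" by auto
        with H show ?thesis by auto
      next
        case False with H \<open>i < d\<close> show ?thesis by auto
      qed
    qed
  qed
  then show ?thesis using assms(2) by auto
qed

theorem lemmaA7:
  fixes M :: "'a measure" and d :: nat and V :: "nat \<Rightarrow> 'a \<Rightarrow> real"
    and R :: "(nat \<Rightarrow> real) \<Rightarrow> real" and R2 :: "real \<Rightarrow> real \<Rightarrow> real"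
    and w :: "nat \<Rightarrow> real" and g :: real
  assumes "prob_space M" and "d \<ge> 2"
    and "uniform_margins M d V"
    and "is_tail_copula_of M d V R"
    and "is_biv_margin_of M V R2"
    and "\<forall>i<d. \<forall>u. nonneg_point d u \<longrightarrow> has_rpartial R i u"
    and "\<forall>i<2. \<forall>u. nonneg_point 2 u \<longrightarrow> has_rpartial (\<lambda>v. R2 (v 0) (v 1)) i u"
    and "g > 0" and "nonneg_point d w"
  shows "0 \<le> rpartial R 0 (w(1 := w 1 + g)) - rpartial R 0 w
       \<and> rpartial R 0 (w(1 := w 1 + g)) - rpartial R 0 w
         \<le> rpartial (\<lambda>v. R2 (v 0) (v 1)) 0 ((\<lambda>_. 0)(0 := w 0, 1 := w 1 + g))
           - rpartial (\<lambda>v. R2 (v 0) (v 1)) 0 ((\<lambda>_. 0)(0 := w 0, 1 := w 1))"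
proof -
  interpret prob_space M by fact
  have d2: "2 \<le> d" by fact
  define x where "x = w 0"
  define y where "y = w 1"
  have x0: "0 \<le> x" and y0: "0 \<le> y" using assms(9) d2 unfolding x_def y_def nonneg_point_def by auto
  have V0: "V 0 \<in> borel_measurable M" and V1: "V 1 \<in> borel_measurable M"
    using assms(3) d2 unfolding uniform_margins_def by auto
  have Qm: "{\<omega>\<in>space M. \<forall>i\<in>{2..<d}. V i \<omega> \<le> s * w i} \<in> sets M" for s
  proof (rule sets.sets_Collect_finite_All)
    fix i assume "i \<in> {2..<d}"
    then have "V i \<in> borel_measurable M" using assms(3) unfolding uniform_margins_def by auto
    then show "{\<omega>\<in>space M. V i \<omega> \<le> s * w i} \<in> sets M" by measurable
  qed simp
  define F where "F \<equiv> \<lambda>p s. measure M {\<omega>\<in>space M. \<forall>i<d. V i \<omega> \<le> s * p i} / s"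
  define G where "G \<equiv> \<lambda>a b s. measure M {\<omega>\<in>space M. V 0 \<omega> \<le> s * a \<and> V 1 \<omega> \<le> s * b} / s"
  have FR: "(F p \<longlongrightarrow> R p) (at_right 0)" if "nonneg_point d p" for p
    using assms(4) that unfolding is_tail_copula_of_def F_def by auto
  have GR: "(G a b \<longlongrightarrow> R2 a b) (at_right 0)" if "0 \<le> a" "0 \<le> b" for a b
    using assms(5) that unfolding is_biv_margin_of_def G_def by auto
  define D where "D \<equiv> \<lambda>h. R (w(1 := y + g, 0 := x + h)) - R (w(1 := y + g)) - (R (w(0 := x + h)) - R w)"
  define D2 where "D2 \<equiv> \<lambda>h. R2 (x + h) (y + g) - R2 x (y + g) - (R2 (x + h) y - R2 x y)"
  have DD: "0 \<le> D h \<and> D h \<le> D2 h" if h: "h > 0" for h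
  proof -
    have nn: "nonneg_point d (w(1 := y + g, 0 := x + h))" "nonneg_point d (w(1 := y + g))"
      "nonneg_point d (w(0 := x + h))" "nonneg_point d w"
      using assms(9) x0 y0 h assms(8) unfolding nonneg_point_def by auto
    have lim1: "((\<lambda>s. F (w(1 := y + g, 0 := x + h)) s - F (w(1 := y + g)) s - (F (w(0 := x + h)) s - F w s)) \<longlongrightarrow> D h) (at_right 0)"
      unfolding D_def by (intro tendsto_intros FR nn)
    have lim2: "((\<lambda>s. G (x + h) (y + g) s - G x (y + g) s - (G (x + h) y s - G x y s)) \<longlongrightarrow> D2 h) (at_right 0)"
      unfolding D2_def using x0 y0 h assms(8) by (intro tendsto_intros GR) auto
    have ev: "\<forall>\<^sub>F s in at_right 0. 0 \<le> F (w(1 := y + g, 0 := x + h)) s - F (w(1 := y + g)) s - (F (w(0 := x + h)) s - F w s)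
       \<and> F (w(1 := y + g, 0 := x + h)) s - F (w(1 := y + g)) s - (F (w(0 := x + h)) s - F w s)
         \<le> G (x + h) (y + g) s - G x (y + g) s - (G (x + h) y s - G x y s)"
      using eventually_at_right_less
    proof eventually_elim
      case (elim s)
      define E where "E \<equiv> \<lambda>Q a b. measure M {\<omega>\<in>space M. V 0 \<omega> \<le> a \<and> V 1 \<omega> \<le> b \<and> Q \<omega>}"
      define Q where "Q \<equiv> \<lambda>\<omega>. \<forall>i\<in>{2..<d}. V i \<omega> \<le> s * w i"
      have r: "0 \<le> E Q (s*(x+h)) (s*(y+g)) - E Q (s*x) (s*(y+g)) - (E Q (s*(x+h)) (s*y) - E Q (s*x) (s*y))"
         "E Q (s*(x+h)) (s*(y+g)) - E Q (s*x) (s*(y+g)) - (E Q (s*(x+h)) (s*y) - E Q (s*x) (s*y))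
         \<le> E (\<lambda>_. True) (s*(x+h)) (s*(y+g)) - E (\<lambda>_. True) (s*x) (s*(y+g)) - (E (\<lambda>_. True) (s*(x+h)) (s*y) - E (\<lambda>_. True) (s*x) (s*y))"
      proof -
        have le: "s*x \<le> s*(x+h)" "s*y \<le> s*(y+g)" using elim h assms(8) by auto
        show "0 \<le> E Q (s*(x+h)) (s*(y+g)) - E Q (s*x) (s*(y+g)) - (E Q (s*(x+h)) (s*y) - E Q (s*x) (s*y))"
          using rect(1)[OF finite_measure_axioms le V0 V1 Qm[of s]] unfolding E_def Q_def by simp
        show "E Q (s*(x+h)) (s*(y+g)) - E Q (s*x) (s*(y+g)) - (E Q (s*(x+h)) (s*y) - E Q (s*x) (s*y))
         \<le> E (\<lambda>_. True) (s*(x+h)) (s*(y+g)) - E (\<lambda>_. True) (s*x) (s*(y+g)) - (E (\<lambda>_. True) (s*(x+h)) (s*y) - E (\<lambda>_. True) (s*x) (s*y))"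
          using rect(2)[OF finite_measure_axioms le V0 V1 Qm[of s]] unfolding E_def Q_def by simp
      qed
      have Fe: "F p s = E Q (s * p 0) (s * p 1) / s" if "\<forall>i\<ge>2. p i = w i" for p
        unfolding F_def E_def Q_def using setsplit[OF d2 that, of M V s] by simp
      have Ge: "G a b s = E (\<lambda>_. True) (s * a) (s * b) / s" for a b
        unfolding G_def E_def by simp
      have "F (w(1 := y + g, 0 := x + h)) s - F (w(1 := y + g)) s - (F (w(0 := x + h)) s - F w s)
        = (E Q (s*(x+h)) (s*(y+g)) - E Q (s*x) (s*(y+g)) - (E Q (s*(x+h)) (s*y) - E Q (s*x) (s*y))) / s"
        by (subst (1 2 3 4) Fe) (auto simp: x_def y_def diff_divide_distrib)
      moreover have "G (x + h) (y + g) s - G x (y + g) s - (G (x + h) y s - G x y s)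
        = (E (\<lambda>_. True) (s*(x+h)) (s*(y+g)) - E (\<lambda>_. True) (s*x) (s*(y+g)) - (E (\<lambda>_. True) (s*(x+h)) (s*y) - E (\<lambda>_. True) (s*x) (s*y))) / s"
        by (simp add: Ge diff_divide_distrib)
      ultimately show ?case using r elim by (simp add: divide_right_mono)
    qed
    have "0 \<le> D h"
      by (rule tendsto_lowerbound[OF lim1]) (use ev in \<open>auto elim: eventually_mono\<close>)
    moreover have "D h \<le> D2 h"
      by (rule tendsto_le[OF _ lim2 lim1]) (use ev in \<open>auto elim: eventually_mono\<close>)
    ultimately show ?thesis by simp
  qed
  have part: "((\<lambda>h. (R (u(0 := u 0 + h)) - R u) / h) \<longlongrightarrow> rpartial R 0 u) (at_right 0)"
    if un: "nonneg_point d u" for u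
  proof -
    obtain L where L: "((\<lambda>h. (R (u(0 := u 0 + h)) - R u) / h) \<longlongrightarrow> L) (at_right 0)"
      using assms(6)[rule_format, of 0 u] d2 un unfolding has_rpartial_def by auto
    then show ?thesis unfolding rpartial_def using tendsto_Lim[OF _ L] by simp
  qed
  have part2: "((\<lambda>h. (R2 (u 0 + h) (u 1) - R2 (u 0) (u 1)) / h) \<longlongrightarrow> rpartial (\<lambda>v. R2 (v 0) (v 1)) 0 u) (at_right 0)"
    if un: "nonneg_point 2 u" for u
  proof -
    obtain L where L: "((\<lambda>h. (R2 ((u(0 := u 0 + h)) 0) ((u(0 := u 0 + h)) 1) - R2 (u 0) (u 1)) / h) \<longlongrightarrow> L) (at_right 0)"
      using assms(7)[rule_format, of 0 u] un unfolding has_rpartial_def by auto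
    then show ?thesis unfolding rpartial_def using tendsto_Lim[OF _ L] by simp
  qed
  have w1: "nonneg_point d (w(1 := y + g))" using assms(9) assms(8) y0 unfolding nonneg_point_def by auto
  have limD: "((\<lambda>h. D h / h) \<longlongrightarrow> rpartial R 0 (w(1 := w 1 + g)) - rpartial R 0 w) (at_right 0)"
  proof -
    have "((\<lambda>h. (R (w(1 := y + g, 0 := x + h)) - R (w(1 := y + g))) / h - (R (w(0 := x + h)) - R w) / h)
       \<longlongrightarrow> rpartial R 0 (w(1 := w 1 + g)) - rpartial R 0 w) (at_right 0)"
      using tendsto_diff[OF part[OF w1] part[OF assms(9)]] by (simp add: x_def y_def)
    then show ?thesis by (simp add: D_def diff_divide_distrib)
  qed
  have limD2: "((\<lambda>h. D2 h / h) \<longlongrightarrow> rpartial (\<lambda>v. R2 (v 0) (v 1)) 0 ((\<lambda>_. 0)(0 := w 0, 1 := w 1 + g))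
           - rpartial (\<lambda>v. R2 (v 0) (v 1)) 0 ((\<lambda>_. 0)(0 := w 0, 1 := w 1))) (at_right 0)"
  proof -
    have n1: "nonneg_point 2 ((\<lambda>_. 0)(0 := w 0, 1 := w 1 + g))" "nonneg_point 2 ((\<lambda>_. 0)(0 := w 0, 1 := w 1))"
      using x0 y0 assms(8) unfolding nonneg_point_def x_def y_def by auto
    show ?thesis
      using tendsto_diff[OF part2[OF n1(1)] part2[OF n1(2)]]
      by (simp add: D2_def diff_divide_distrib x_def y_def)
  qed
  have ev: "\<forall>\<^sub>F h in at_right 0. 0 \<le> D h / h \<and> D h / h \<le> D2 h / h"
    using eventually_at_right_less
    by eventually_elim (use DD in \<open>auto intro: divide_right_mono\<close>)
  have "0 \<le> rpartial R 0 (w(1 := w 1 + g)) - rpartial R 0 w"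
    by (rule tendsto_lowerbound[OF limD]) (use ev in \<open>auto elim: eventually_mono\<close>)
  moreover have "rpartial R 0 (w(1 := w 1 + g)) - rpartial R 0 w
         \<le> rpartial (\<lambda>v. R2 (v 0) (v 1)) 0 ((\<lambda>_. 0)(0 := w 0, 1 := w 1 + g))
           - rpartial (\<lambda>v. R2 (v 0) (v 1)) 0 ((\<lambda>_. 0)(0 := w 0, 1 := w 1))"
    by (rule tendsto_le[OF _ limD2 limD]) (use ev in \<open>auto elim: eventually_mono\<close>)
  ultimately show ?thesis by simp
qed

end
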